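(* Let $R$ be a ring and $M$ any $R$-module. There exists an inverse system of $R$-modules $(D_\alpha,g_{\alpha\beta}\mid\alpha\le\beta<\aleph_1)$ indexed by $\aleph_1$ (with the ordinal order) in which every $g_{\alpha\beta}$ is surjective, each $D_\alpha$ is a direct sum of copies of $M$, and $\varprojlim_{\alpha<\aleph_1}D_\alpha=0$. In particular, if $M\neq 0$, this inverse system is Mittag-Leffler but not strict Mittag-Leffler.
   Context: An inverse system $(D_i,g_{ij})$ with inverse limit $(D,g_i)$ is Mittag-Leffler if for each $i$ there is $j\ge i$ with $\operatorname{Im} g_{ij}=\operatorname{Im} g_{ik}$ for all $k\ge j$, and strict Mittag-Leffler if for each $i$ there is $j\ge i$ with $\operatorname{Im} g_{ij}=\operatorname{Im} g_i$. *)

theory Defs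
  imports "HOL-Algebra.Module" "HOL-Library.Countable_Set"
begin

text \<open>HOL-Algebra's locale module requires a commutative ring; we use the same
axioms over an arbitrary ring.\<close>

locale left_module = R?: ring R + M?: abelian_group M for R (structure) and M (structure) +
  assumes smult_closed [simp, intro]:
      "\<lbrakk> a \<in> carrier R; x \<in> carrier M \<rbrakk> \<Longrightarrow> a \<odot>\<^bsub>M\<^esub> x \<in> carrier M"
    and smult_l_distr:
      "\<lbrakk> a \<in> carrier R; b \<in> carrier R; x \<in> carrier M \<rbrakk> \<Longrightarrow>
      (a \<oplus> b) \<odot>\<^bsub>M\<^esub> x = a \<odot>\<^bsub>M\<^esub> x \<oplus>\<^bsub>M\<^esub> b \<odot>\<^bsub>M\<^esub> x"
    and smult_r_distr:
      "\<lbrakk> a \<in> carrier R; x \<in> carrier M; y \<in> carrier M \<rbrakk> \<Longrightarrow>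
      a \<odot>\<^bsub>M\<^esub> (x \<oplus>\<^bsub>M\<^esub> y) = a \<odot>\<^bsub>M\<^esub> x \<oplus>\<^bsub>M\<^esub> a \<odot>\<^bsub>M\<^esub> y"
    and smult_assoc1:
      "\<lbrakk> a \<in> carrier R; b \<in> carrier R; x \<in> carrier M \<rbrakk> \<Longrightarrow>
      (a \<otimes> b) \<odot>\<^bsub>M\<^esub> x = a \<odot>\<^bsub>M\<^esub> (b \<odot>\<^bsub>M\<^esub> x)"
    and smult_one [simp]:
      "x \<in> carrier M \<Longrightarrow> \<one> \<odot>\<^bsub>M\<^esub> x = x"

definition lmod_hom :: "('a, 'm) ring_scheme \<Rightarrow> ('a, 'b, 'c) module_scheme
    \<Rightarrow> ('a, 'd, 'e) module_scheme \<Rightarrow> ('b \<Rightarrow> 'd) set" where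
  "lmod_hom R M N = {f. f \<in> carrier M \<rightarrow> carrier N
     \<and> (\<forall>x\<in>carrier M. \<forall>y\<in>carrier M. f (x \<oplus>\<^bsub>M\<^esub> y) = f x \<oplus>\<^bsub>N\<^esub> f y)
     \<and> (\<forall>a\<in>carrier R. \<forall>x\<in>carrier M. f (a \<odot>\<^bsub>M\<^esub> x) = a \<odot>\<^bsub>N\<^esub> f x)}"

text \<open>The multiplicative fields of the record are irrelevant for a module.\<close>

definition dsum_copies :: "'c set \<Rightarrow> ('a, 'b, 'e) module_scheme \<Rightarrow> ('a, 'c \<Rightarrow> 'b) module" where
  "dsum_copies X M =
    \<lparr> carrier = {f. (\<forall>x\<in>X. f x \<in> carrier M) \<and> (\<forall>x. x \<notin> X \<longrightarrow> f x = \<zero>\<^bsub>M\<^esub>)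
                   \<and> finite {x. f x \<noteq> \<zero>\<^bsub>M\<^esub>}},
      monoid.mult = (\<lambda>f g. undefined), one = undefined,
      zero = (\<lambda>x. \<zero>\<^bsub>M\<^esub>),
      add = (\<lambda>f g x. f x \<oplus>\<^bsub>M\<^esub> g x),
      smult = (\<lambda>a f x. a \<odot>\<^bsub>M\<^esub> f x) \<rparr>"

definition inverse_system ::
  "('a, 'm) ring_scheme \<Rightarrow> ('i::order \<Rightarrow> ('a, 'b, 'c) module_scheme) \<Rightarrow> ('i \<Rightarrow> 'i \<Rightarrow> 'b \<Rightarrow> 'b) \<Rightarrow> bool" where
  "inverse_system R D g \<longleftrightarrow>
     (\<forall>i. left_module R (D i))
   \<and> (\<forall>i j. i \<le> j \<longrightarrow> g i j \<in> lmod_hom R (D j) (D i))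
   \<and> (\<forall>i. \<forall>x\<in>carrier (D i). g i i x = x)
   \<and> (\<forall>i j k. i \<le> j \<longrightarrow> j \<le> k \<longrightarrow> (\<forall>x\<in>carrier (D k). g i j (g j k x) = g i k x))"

definition inv_limit :: "('i::order \<Rightarrow> ('a, 'b, 'c) module_scheme) \<Rightarrow> ('i \<Rightarrow> 'i \<Rightarrow> 'b \<Rightarrow> 'b) \<Rightarrow> ('i \<Rightarrow> 'b) set" where
  "inv_limit D g = {x. (\<forall>i. x i \<in> carrier (D i)) \<and> (\<forall>i j. i \<le> j \<longrightarrow> g i j (x j) = x i)}"

definition inv_limit_zero :: "('i::order \<Rightarrow> ('a, 'b, 'c) module_scheme) \<Rightarrow> ('i \<Rightarrow> 'i \<Rightarrow> 'b \<Rightarrow> 'b) \<Rightarrow> bool" where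
  "inv_limit_zero D g \<longleftrightarrow> inv_limit D g = {(\<lambda>i. \<zero>\<^bsub>D i\<^esub>)}"

definition mittag_leffler :: "('i::order \<Rightarrow> ('a, 'b, 'c) module_scheme) \<Rightarrow> ('i \<Rightarrow> 'i \<Rightarrow> 'b \<Rightarrow> 'b) \<Rightarrow> bool" where
  "mittag_leffler D g \<longleftrightarrow>
     (\<forall>i. \<exists>j\<ge>i. \<forall>k\<ge>j. g i j ` carrier (D j) = g i k ` carrier (D k))"

definition strict_mittag_leffler :: "('i::order \<Rightarrow> ('a, 'b, 'c) module_scheme) \<Rightarrow> ('i \<Rightarrow> 'i \<Rightarrow> 'b \<Rightarrow> 'b) \<Rightarrow> bool" where
  "strict_mittag_leffler D g \<longleftrightarrow>
     (\<forall>i. \<exists>j\<ge>i. g i j ` carrier (D j) = (\<lambda>x. x i) ` inv_limit D g)"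

end

theory Submission
  imports Defs
begin


definition push :: "('b, 'm) ring_scheme \<Rightarrow> ('x \<Rightarrow> 'y) \<Rightarrow> ('x \<Rightarrow> 'b) \<Rightarrow> 'y \<Rightarrow> 'b" where
  "push G \<phi> h y = finsum G h {z. h z \<noteq> \<zero>\<^bsub>G\<^esub> \<and> \<phi> z = y}"

context abelian_monoid
begin

definition fs :: "('x \<Rightarrow> 'a) \<Rightarrow> bool" where
  "fs h \<longleftrightarrow> finite {z. h z \<noteq> \<zero>} \<and> (\<forall>z. h z \<in> carrier G)"

lemma push_eq:
  assumes "fs h" "finite A" "{z. h z \<noteq> \<zero>} \<subseteq> A"
  shows "push G \<phi> h y = finsum G h {z\<in>A. \<phi> z = y}"
  unfolding push_def
  by (rule add.finprod_mono_neutral_cong_left) (use assms in \<open>auto simp: fs_def\<close>)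

lemma push_closed: "fs h \<Longrightarrow> push G \<phi> h y \<in> carrier G"
  unfolding push_def fs_def by (intro finsum_closed) auto

lemma push_supp: "fs h \<Longrightarrow> {y. push G \<phi> h y \<noteq> \<zero>} \<subseteq> \<phi> ` {z. h z \<noteq> \<zero>}"
proof
  fix y assume "y \<in> {y. push G \<phi> h y \<noteq> \<zero>}"
  moreover have "push G \<phi> h y = \<zero>" if E: "{z. h z \<noteq> \<zero> \<and> \<phi> z = y} = {}"
    unfolding push_def E by simp
  ultimately have "{z. h z \<noteq> \<zero> \<and> \<phi> z = y} \<noteq> {}" by blast
  then show "y \<in> \<phi> ` {z. h z \<noteq> \<zero>}" by auto
qed

lemma push_fs: assumes "fs h" shows "fs (push G \<phi> h)"
proof -
  have sub: "{y. push G \<phi> h y \<noteq> \<zero>} \<subseteq> \<phi> ` {z. h z \<noteq> \<zero>}" by (rule push_supp[OF assms])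
  have "finite (\<phi> ` {z. h z \<noteq> \<zero>})" using assms by (simp add: fs_def)
  then show ?thesis using sub push_closed[OF assms] unfolding fs_def by (metis finite_subset)
qed

lemma push_add:
  assumes "fs h1" "fs h2"
  shows "push G \<phi> (\<lambda>z. h1 z \<oplus> h2 z) y = push G \<phi> h1 y \<oplus> push G \<phi> h2 y"
proof -
  let ?A = "{z. h1 z \<noteq> \<zero>} \<union> {z. h2 z \<noteq> \<zero>}"
  have fA: "finite ?A" using assms by (auto simp: fs_def)
  have fs3: "fs (\<lambda>z. h1 z \<oplus> h2 z)" unfolding fs_def
  proof
    have "{z. h1 z \<oplus> h2 z \<noteq> \<zero>} \<subseteq> ?A" using assms by (auto simp: fs_def)
    then show "finite {z. h1 z \<oplus> h2 z \<noteq> \<zero>}" using fA finite_subset by blast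
  qed (use assms in \<open>auto simp: fs_def\<close>)
  have "push G \<phi> (\<lambda>z. h1 z \<oplus> h2 z) y = finsum G (\<lambda>z. h1 z \<oplus> h2 z) {z\<in>?A. \<phi> z = y}"
    by (rule push_eq[OF fs3]) (use fA assms in \<open>auto simp: fs_def\<close>)
  also have "\<dots> = finsum G h1 {z\<in>?A. \<phi> z = y} \<oplus> finsum G h2 {z\<in>?A. \<phi> z = y}"
    by (rule finsum_addf) (use assms in \<open>auto simp: fs_def\<close>)
  also have "\<dots> = push G \<phi> h1 y \<oplus> push G \<phi> h2 y"
    using push_eq[OF assms(1) fA, of \<phi> y] push_eq[OF assms(2) fA, of \<phi> y] by auto
  finally show ?thesis .
qed

lemma push_comp:
  assumes "fs h"
  shows "push G \<psi> (push G \<phi> h) y = push G (\<lambda>z. \<psi> (\<phi> z)) h y"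
proof -
  let ?S = "{z. h z \<noteq> \<zero>}"
  have fS: "finite ?S" using assms by (auto simp: fs_def)
  have "push G \<psi> (push G \<phi> h) y = finsum G (push G \<phi> h) {w\<in>\<phi> ` ?S. \<psi> w = y}"
    by (rule push_eq[OF push_fs[OF assms]]) (use fS push_supp[OF assms, of \<phi>] in blast)+
  also have "\<dots> = finsum G (\<lambda>w. finsum G h {z\<in>?S. \<phi> z = w}) {w\<in>\<phi> ` ?S. \<psi> w = y}"
    by (rule finsum_cong') (use push_eq[OF assms fS] assms in \<open>auto simp: fs_def intro!: finsum_closed\<close>)
  also have "\<dots> = finsum G h (\<Union>((\<lambda>w. {z\<in>?S. \<phi> z = w}) ` {w\<in>\<phi> ` ?S. \<psi> w = y}))"
    by (rule add.finprod_UN_disjoint[symmetric]) (use fS assms in \<open>auto simp: fs_def pairwise_def disjnt_def\<close>)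
  also have "\<Union>((\<lambda>w. {z\<in>?S. \<phi> z = w}) ` {w\<in>\<phi> ` ?S. \<psi> w = y}) = {z\<in>?S. \<psi> (\<phi> z) = y}"
    by auto
  also have "finsum G h \<dots> = push G (\<lambda>z. \<psi> (\<phi> z)) h y"
    by (simp add: push_def)
  finally show ?thesis .
qed

lemma push_id:
  assumes "fs h" "\<And>z. h z \<noteq> \<zero> \<Longrightarrow> \<phi> z = z"
  shows "push G \<phi> h y = h y"
proof (cases "h y = \<zero>")
  case True
  have E: "{z. h z \<noteq> \<zero> \<and> \<phi> z = y} = {}" using assms True by auto
  show ?thesis using True unfolding push_def E by simp
next
  case False
  have "{z. h z \<noteq> \<zero> \<and> \<phi> z = y} = {y}" using assms False by auto
  then show ?thesis using assms(1) by (simp add: push_def fs_def finsum_singleton)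
qed

end


context left_module
begin

lemma smult_zero: assumes a: "a \<in> carrier R" shows "a \<odot>\<^bsub>M\<^esub> \<zero>\<^bsub>M\<^esub> = \<zero>\<^bsub>M\<^esub>"
proof -
  have "a \<odot>\<^bsub>M\<^esub> \<zero>\<^bsub>M\<^esub> = a \<odot>\<^bsub>M\<^esub> (\<zero>\<^bsub>M\<^esub> \<oplus>\<^bsub>M\<^esub> \<zero>\<^bsub>M\<^esub>)" by simp
  also have "\<dots> = a \<odot>\<^bsub>M\<^esub> \<zero>\<^bsub>M\<^esub> \<oplus>\<^bsub>M\<^esub> a \<odot>\<^bsub>M\<^esub> \<zero>\<^bsub>M\<^esub>" by (rule smult_r_distr) (use a in auto)
  finally have e: "a \<odot>\<^bsub>M\<^esub> \<zero>\<^bsub>M\<^esub> = a \<odot>\<^bsub>M\<^esub> \<zero>\<^bsub>M\<^esub> \<oplus>\<^bsub>M\<^esub> a \<odot>\<^bsub>M\<^esub> \<zero>\<^bsub>M\<^esub>" .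
  have c: "a \<odot>\<^bsub>M\<^esub> \<zero>\<^bsub>M\<^esub> \<in> carrier M" using a by simp
  show ?thesis using e M.add.l_cancel_one'[OF c c] by simp
qed

lemma finsum_smult:
  assumes "finite A" "a \<in> carrier R" "f \<in> A \<rightarrow> carrier M"
  shows "finsum M (\<lambda>z. a \<odot>\<^bsub>M\<^esub> f z) A = a \<odot>\<^bsub>M\<^esub> finsum M f A"
  using assms(1,3)
proof (induction A rule: finite_induct)
  case empty
  then show ?case using assms(2) by (simp add: smult_zero)
next
  case (insert x F)
  then have fx: "f x \<in> carrier M" and fF: "f \<in> F \<rightarrow> carrier M" by auto
  have "finsum M (\<lambda>z. a \<odot>\<^bsub>M\<^esub> f z) (insert x F) = a \<odot>\<^bsub>M\<^esub> f x \<oplus>\<^bsub>M\<^esub> finsum M (\<lambda>z. a \<odot>\<^bsub>M\<^esub> f z) F"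
    using insert fx fF assms(2) by (intro M.finsum_insert) auto
  also have "\<dots> = a \<odot>\<^bsub>M\<^esub> f x \<oplus>\<^bsub>M\<^esub> a \<odot>\<^bsub>M\<^esub> finsum M f F" using insert fF by simp
  also have "\<dots> = a \<odot>\<^bsub>M\<^esub> (f x \<oplus>\<^bsub>M\<^esub> finsum M f F)"
    using assms(2) fx fF by (simp add: smult_r_distr)
  also have "f x \<oplus>\<^bsub>M\<^esub> finsum M f F = finsum M f (insert x F)"
    using insert fx fF by (intro M.finsum_insert[symmetric]) auto
  finally show ?case .
qed

lemma push_smult:
  assumes "M.fs h" "a \<in> carrier R"
  shows "push M \<phi> (\<lambda>z. a \<odot>\<^bsub>M\<^esub> h z) y = a \<odot>\<^bsub>M\<^esub> push M \<phi> h y"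
proof -
  let ?A = "{z. h z \<noteq> \<zero>\<^bsub>M\<^esub>}"
  have fA: "finite ?A" using assms by (auto simp: M.fs_def)
  have sub: "{z. a \<odot>\<^bsub>M\<^esub> h z \<noteq> \<zero>\<^bsub>M\<^esub>} \<subseteq> ?A" using assms smult_zero by auto
  have fs2: "M.fs (\<lambda>z. a \<odot>\<^bsub>M\<^esub> h z)" unfolding M.fs_def
    using finite_subset[OF sub fA] assms by (auto simp: M.fs_def)
  have "push M \<phi> (\<lambda>z. a \<odot>\<^bsub>M\<^esub> h z) y = finsum M (\<lambda>z. a \<odot>\<^bsub>M\<^esub> h z) {z\<in>?A. \<phi> z = y}"
    by (rule M.push_eq[OF fs2]) (use fA sub in auto)
  also have "\<dots> = a \<odot>\<^bsub>M\<^esub> finsum M h {z\<in>?A. \<phi> z = y}"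
    by (rule finsum_smult) (use fA assms in \<open>auto simp: M.fs_def\<close>)
  also have "finsum M h {z\<in>?A. \<phi> z = y} = push M \<phi> h y" by (simp add: push_def)
  finally show ?thesis .
qed

end

lemma dsum_carrier: "h \<in> carrier (dsum_copies X M) \<longleftrightarrow>
   (\<forall>x\<in>X. h x \<in> carrier M) \<and> (\<forall>x. x \<notin> X \<longrightarrow> h x = \<zero>\<^bsub>M\<^esub>) \<and> finite {x. h x \<noteq> \<zero>\<^bsub>M\<^esub>}"
  by (simp add: dsum_copies_def)

lemma dsum_simps [simp]:
  "\<zero>\<^bsub>dsum_copies X M\<^esub> = (\<lambda>x. \<zero>\<^bsub>M\<^esub>)"
  "f \<oplus>\<^bsub>dsum_copies X M\<^esub> g = (\<lambda>x. f x \<oplus>\<^bsub>M\<^esub> g x)"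
  "a \<odot>\<^bsub>dsum_copies X M\<^esub> f = (\<lambda>x. a \<odot>\<^bsub>M\<^esub> f x)"
  by (simp_all add: dsum_copies_def)

lemma dsum_fs: "abelian_monoid M \<Longrightarrow> h \<in> carrier (dsum_copies X M) \<Longrightarrow> abelian_monoid.fs M h"
  by (auto simp: dsum_carrier abelian_monoid.fs_def) (metis abelian_monoid.zero_closed)

lemma dsum_left_module:
  assumes lm: "left_module R M"
  shows "left_module R (dsum_copies X M)"
proof -
  interpret left_module R M by (rule lm)
  let ?D = "dsum_copies X M"
  have fin_add: "finite {x. f x \<oplus>\<^bsub>M\<^esub> g x \<noteq> \<zero>\<^bsub>M\<^esub>}"
    if "finite {x. f x \<noteq> \<zero>\<^bsub>M\<^esub>}" "finite {x. g x \<noteq> \<zero>\<^bsub>M\<^esub>}" for f g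
  proof -
    have "{x. f x \<oplus>\<^bsub>M\<^esub> g x \<noteq> \<zero>\<^bsub>M\<^esub>} \<subseteq> {x. f x \<noteq> \<zero>\<^bsub>M\<^esub>} \<union> {x. g x \<noteq> \<zero>\<^bsub>M\<^esub>}" by auto
    then show ?thesis using that finite_subset by blast
  qed
  have ag: "abelian_group ?D"
  proof (rule abelian_groupI)
    fix x y assume "x \<in> carrier ?D" "y \<in> carrier ?D"
    then show "x \<oplus>\<^bsub>?D\<^esub> y \<in> carrier ?D" using fin_add by (auto simp: dsum_carrier)
  next
    show "\<zero>\<^bsub>?D\<^esub> \<in> carrier ?D" by (auto simp: dsum_carrier)
  next
    fix x y z assume "x \<in> carrier ?D" "y \<in> carrier ?D" "z \<in> carrier ?D"
    then show "x \<oplus>\<^bsub>?D\<^esub> y \<oplus>\<^bsub>?D\<^esub> z = x \<oplus>\<^bsub>?D\<^esub> (y \<oplus>\<^bsub>?D\<^esub> z)"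
      by (auto simp: dsum_carrier fun_eq_iff M.a_assoc) (metis M.a_assoc M.zero_closed)
  next
    fix x y assume "x \<in> carrier ?D" "y \<in> carrier ?D"
    then show "x \<oplus>\<^bsub>?D\<^esub> y = y \<oplus>\<^bsub>?D\<^esub> x"
      by (auto simp: dsum_carrier fun_eq_iff) (metis M.a_comm M.zero_closed)
  next
    fix x assume "x \<in> carrier ?D"
    then show "\<zero>\<^bsub>?D\<^esub> \<oplus>\<^bsub>?D\<^esub> x = x"
      by (auto simp: dsum_carrier fun_eq_iff) (metis M.l_zero M.zero_closed)
  next
    fix x assume x: "x \<in> carrier ?D"
    let ?y = "\<lambda>z. \<ominus>\<^bsub>M\<^esub> x z"
    have "{z. ?y z \<noteq> \<zero>\<^bsub>M\<^esub>} \<subseteq> {z. x z \<noteq> \<zero>\<^bsub>M\<^esub>}" using x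
      by (auto simp: dsum_carrier)
    then have "?y \<in> carrier ?D" using x by (auto simp: dsum_carrier intro: finite_subset)
    moreover have "?y \<oplus>\<^bsub>?D\<^esub> x = \<zero>\<^bsub>?D\<^esub>" using x
      by (auto simp: dsum_carrier fun_eq_iff) (metis M.l_neg M.zero_closed)
    ultimately show "\<exists>y\<in>carrier ?D. y \<oplus>\<^bsub>?D\<^esub> x = \<zero>\<^bsub>?D\<^esub>" by blast
  qed
  show ?thesis
  proof (intro left_module.intro left_module_axioms.intro)
    show "ring R" by (rule R.ring_axioms)
    show "abelian_group ?D" by (rule ag)
  next
    fix a x assume a: "a \<in> carrier R" and x: "x \<in> carrier ?D"
    have "{z. a \<odot>\<^bsub>M\<^esub> x z \<noteq> \<zero>\<^bsub>M\<^esub>} \<subseteq> {z. x z \<noteq> \<zero>\<^bsub>M\<^esub>}" using smult_zero[OF a] by auto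
    then show "a \<odot>\<^bsub>?D\<^esub> x \<in> carrier ?D" using x a smult_zero[OF a]
      by (auto simp: dsum_carrier intro: finite_subset)
  next
    fix a b x assume "a \<in> carrier R" "b \<in> carrier R" "x \<in> carrier ?D"
    then show "(a \<oplus>\<^bsub>R\<^esub> b) \<odot>\<^bsub>?D\<^esub> x = a \<odot>\<^bsub>?D\<^esub> x \<oplus>\<^bsub>?D\<^esub> b \<odot>\<^bsub>?D\<^esub> x"
      by (auto simp: dsum_carrier fun_eq_iff) (metis M.zero_closed smult_l_distr)
  next
    fix a x y assume "a \<in> carrier R" "x \<in> carrier ?D" "y \<in> carrier ?D"
    then show "a \<odot>\<^bsub>?D\<^esub> (x \<oplus>\<^bsub>?D\<^esub> y) = a \<odot>\<^bsub>?D\<^esub> x \<oplus>\<^bsub>?D\<^esub> a \<odot>\<^bsub>?D\<^esub> y"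
      by (auto simp: dsum_carrier fun_eq_iff) (metis M.zero_closed smult_r_distr)
  next
    fix a b x assume "a \<in> carrier R" "b \<in> carrier R" "x \<in> carrier ?D"
    then show "(a \<otimes>\<^bsub>R\<^esub> b) \<odot>\<^bsub>?D\<^esub> x = a \<odot>\<^bsub>?D\<^esub> (b \<odot>\<^bsub>?D\<^esub> x)"
      by (auto simp: dsum_carrier fun_eq_iff) (metis M.zero_closed smult_assoc1)
  next
    fix x assume "x \<in> carrier ?D"
    then show "\<one>\<^bsub>R\<^esub> \<odot>\<^bsub>?D\<^esub> x = x"
      by (auto simp: dsum_carrier fun_eq_iff) (metis M.zero_closed smult_one)
  qed
qed




definition rs :: "'i::linorder \<Rightarrow> ('i \<Rightarrow> nat option) \<Rightarrow> ('i \<Rightarrow> nat option)" where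
  "rs \<alpha> z = (\<lambda>a. if a < \<alpha> then z a else None)"

definition XX :: "'i::linorder \<Rightarrow> ('i \<Rightarrow> nat option) set" where
  "XX \<alpha> = {f. (\<forall>a. (f a \<noteq> None) = (a < \<alpha>)) \<and> inj_on f {a. a < \<alpha>}
              \<and> infinite (- {n. \<exists>a. f a = Some n})}"

lemma rs_rs: assumes "\<alpha> \<le> \<beta>" shows "rs \<alpha> (rs \<beta> z) = rs \<alpha> z"
proof -
  have lt: "a < \<alpha> \<Longrightarrow> a < \<beta>" for a using assms less_le_trans by blast
  show ?thesis by (auto simp: rs_def fun_eq_iff lt)
qed

lemma rs_id: "z \<in> XX \<alpha> \<Longrightarrow> rs \<alpha> z = z"
  by (auto simp: rs_def XX_def fun_eq_iff)

lemma rs_XX: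
  assumes z: "z \<in> XX \<beta>" and ab: "\<alpha> \<le> \<beta>"
  shows "rs \<alpha> z \<in> XX \<alpha>"
proof -
  have lt: "a < \<alpha> \<Longrightarrow> a < \<beta>" for a using ab less_le_trans by blast
  have "- {n. \<exists>a. z a = Some n} \<subseteq> - {n. \<exists>a. rs \<alpha> z a = Some n}"
    by (auto simp: rs_def split: if_splits)
  moreover have "infinite (- {n. \<exists>a. z a = Some n})" using z by (simp add: XX_def)
  ultimately have inf: "infinite (- {n. \<exists>a. rs \<alpha> z a = Some n})"
    by (rule infinite_super)
  have "inj_on (rs \<alpha> z) {a. a < \<alpha>}"
  proof -
    have "inj_on z {a. a < \<beta>}" using z by (simp add: XX_def)
    then have "inj_on z {a. a < \<alpha>}" by (rule inj_on_subset) (use lt in blast)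
    then show ?thesis by (auto simp: inj_on_def rs_def)
  qed
  moreover note inf
  moreover have "\<forall>a. (rs \<alpha> z a \<noteq> None) = (a < \<alpha>)" using z ab
    by (auto simp: XX_def rs_def lt)
  ultimately show ?thesis by (simp add: XX_def)
qed




lemma XX_ext:
  assumes f: "f \<in> XX \<alpha>" and ab: "\<alpha> \<le> \<beta>" and cb: "countable {a. a < \<beta>}"
  shows "\<exists>z\<in>XX \<beta>. rs \<alpha> z = f"
proof -
  define C where "C = {a. \<alpha> \<le> a \<and> a < \<beta>}"
  have cC: "countable C" using cb unfolding C_def by (rule countable_subset[rotated]) auto
  define E where "E = - {n. \<exists>a. f a = Some n}"
  have iE: "infinite E" using f by (simp add: XX_def E_def)
  define e where "e = enumerate E"
  have eE: "e n \<in> E" for n using iE by (simp add: e_def enumerate_in_set)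
  have einj: "e m = e n \<longleftrightarrow> m = n" for m n
  proof
    assume "e m = e n"
    then show "m = n" using iE unfolding e_def
      by (metis enumerate_mono_iff less_irrefl linorder_neq_iff)
  qed simp
  define c where "c = to_nat_on C"
  have cinj: "a \<in> C \<Longrightarrow> b \<in> C \<Longrightarrow> c a = c b \<longleftrightarrow> a = b" for a b
    using cC unfolding c_def by simp
  define z where "z = (\<lambda>a. if a < \<alpha> then f a else if a < \<beta> then Some (e (2 * c a)) else None)"
  have fdom: "f a \<noteq> None \<longleftrightarrow> a < \<alpha>" for a using f by (simp add: XX_def)
  have lt: "a < \<alpha> \<Longrightarrow> a < \<beta>" for a using ab less_le_trans by blast
  have finj: "inj_on f {a. a < \<alpha>}" using f by (simp add: XX_def)
  have "\<forall>a. (z a \<noteq> None) = (a < \<beta>)"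
    using fdom lt by (auto simp: z_def)
  moreover have "inj_on z {a. a < \<beta>}"
  proof (rule inj_onI)
    fix a b assume a: "a \<in> {a. a < \<beta>}" and b: "b \<in> {a. a < \<beta>}" and eq: "z a = z b"
    show "a = b"
    proof (cases "a < \<alpha>"; cases "b < \<alpha>")
      assume "a < \<alpha>" "b < \<alpha>" then show ?thesis using eq finj by (auto simp: z_def inj_on_def)
    next
      assume "\<not> a < \<alpha>" "\<not> b < \<alpha>"
      then have "a \<in> C" "b \<in> C" using a b by (auto simp: C_def)
      then show ?thesis using eq \<open>\<not> a < \<alpha>\<close> \<open>\<not> b < \<alpha>\<close> a b cinj einj by (auto simp: z_def)
    next
      assume "a < \<alpha>" "\<not> b < \<alpha>"
      then have "f a = Some (e (2 * c b))" using eq b by (auto simp: z_def)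
      then show ?thesis using eE[of "2 * c b"] by (auto simp: E_def)
    next
      assume "\<not> a < \<alpha>" "b < \<alpha>"
      then have "f b = Some (e (2 * c a))" using eq a by (auto simp: z_def)
      then show ?thesis using eE[of "2 * c a"] by (auto simp: E_def)
    qed
  qed
  moreover have "infinite (- {n. \<exists>a. z a = Some n})"
  proof -
    have "range (\<lambda>k. e (2*k+1)) \<subseteq> - {n. \<exists>a. z a = Some n}"
    proof
      fix m assume "m \<in> range (\<lambda>k. e (2*k+1))"
      then obtain j where mj: "m = e (2*j+1)" by auto
      define k where "k = 2*j+1"
      have k: "odd k" "m = e k" using mj by (auto simp: k_def)
      have "z a \<noteq> Some m" for a
      proof
        assume za: "z a = Some m"
        show False
        proof (cases "a < \<alpha>")
          case True then have "f a = Some (e k)" using za k by (simp add: z_def)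
          then show False using eE[of k] by (auto simp: E_def)
        next
          case False then have "e (2 * c a) = e k" using za k by (auto simp: z_def split: if_splits)
          then show False using k einj by auto
        qed
      qed
      then show "m \<in> - {n. \<exists>a. z a = Some n}" by auto
    qed
    moreover have "infinite (range (\<lambda>k. e (2*k+1)))"
      by (rule range_inj_infinite) (auto simp: inj_def einj)
    ultimately show ?thesis by (rule infinite_super)
  qed
  ultimately have "z \<in> XX \<beta>" by (simp add: XX_def)
  moreover have "rs \<alpha> z = f"
  proof
    fix a show "rs \<alpha> z a = f a" using fdom[of a] by (cases "a < \<alpha>") (auto simp: rs_def z_def)
  qed
  ultimately show ?thesis by blast
qed




lemma bound_exists:
  fixes B :: "'i::linorder set"
  assumes unc: "\<not> countable (UNIV :: 'i set)" and seg: "\<forall>b::'i. countable {a. a < b}"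
    and cB: "countable B"
  shows "\<exists>\<gamma>. \<forall>b\<in>B. b \<le> \<gamma>"
proof (rule ccontr)
  assume "\<not> ?thesis"
  then have "\<forall>\<gamma>. \<exists>b\<in>B. \<gamma> < b" by (auto simp: not_le)
  then have "UNIV \<subseteq> (\<Union>b\<in>B. {a. a < b})" by blast
  moreover have "countable (\<Union>b\<in>B. {a. a < b})" using cB seg by auto
  ultimately show False using unc countable_subset by blast
qed

lemma exists_greater:
  fixes \<delta> :: "'i::linorder"
  assumes unc: "\<not> countable (UNIV :: 'i set)" and seg: "\<forall>b::'i. countable {a. a < b}"
  shows "\<exists>\<gamma>. \<delta> < \<gamma>"
proof (rule ccontr)
  assume "\<not> ?thesis"
  then have "UNIV \<subseteq> insert \<delta> {a. a < \<delta>}" by (auto simp: not_less order.order_iff_strict)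
  moreover have "countable (insert \<delta> {a. a < \<delta>})" using seg by auto
  ultimately show False using unc countable_subset by blast
qed

lemma mono_eventually_const:
  fixes f :: "'i::linorder \<Rightarrow> nat"
  assumes unc: "\<not> countable (UNIV :: 'i set)" and seg: "\<forall>b::'i. countable {a. a < b}"
    and mono: "\<And>a b. a \<le> b \<Longrightarrow> f a \<le> f b"
  shows "\<exists>\<beta>1\<ge>\<alpha>0. \<forall>\<gamma>\<ge>\<beta>1. f \<gamma> = f \<beta>1"
proof -
  define b where "b v = (SOME a. f a = v)" for v
  have fb: "v \<in> range f \<Longrightarrow> f (b v) = v" for v unfolding b_def by (rule someI_ex) auto
  have "countable (insert \<alpha>0 (b ` range f))" by auto
  then obtain \<gamma> where \<gamma>: "\<forall>x\<in>insert \<alpha>0 (b ` range f). x \<le> \<gamma>"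
    using bound_exists[OF unc seg] by blast
  have le: "f \<delta> \<le> f \<gamma>" for \<delta>
  proof -
    have "b (f \<delta>) \<le> \<gamma>" using \<gamma> by auto
    then have "f (b (f \<delta>)) \<le> f \<gamma>" by (rule mono)
    then show ?thesis using fb[of "f \<delta>"] by simp
  qed
  have "\<alpha>0 \<le> \<gamma>" using \<gamma> by auto
  moreover have "\<forall>\<delta>\<ge>\<gamma>. f \<delta> = f \<gamma>" using le mono by (meson antisym)
  ultimately show ?thesis by blast
qed

lemma XX_ne:
  fixes \<alpha> :: "'i::wellorder"
  assumes seg: "\<forall>b::'i. countable {a. a < b}"
  shows "\<exists>f. f \<in> XX \<alpha>"
proof -
  define m :: 'i where "m = (LEAST a. True)"
  have m: "m \<le> a" for a unfolding m_def by (rule Least_le) simp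
  have "(\<lambda>_. None) \<in> XX m" using m by (auto simp: XX_def not_less[symmetric] leD)
  then show ?thesis using XX_ext[of "\<lambda>_. None" m \<alpha>] m seg by blast
qed




context left_module
begin

abbreviation DD :: "'i::linorder \<Rightarrow> ('a, ('i \<Rightarrow> nat option) \<Rightarrow> 'c) module" where
  "DD \<beta> \<equiv> dsum_copies (XX \<beta>) M"

lemma DD_fs: "h \<in> carrier (DD \<beta>) \<Longrightarrow> M.fs h"
  by (rule dsum_fs[OF M.abelian_monoid_axioms])

lemma supp_XX: "h \<in> carrier (DD \<beta>) \<Longrightarrow> h z \<noteq> \<zero>\<^bsub>M\<^esub> \<Longrightarrow> z \<in> XX \<beta>"
  by (auto simp: dsum_carrier)

lemma g_closed:
  assumes ab: "\<alpha> \<le> \<beta>" and h: "h \<in> carrier (DD \<beta>)"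
  shows "push M (rs \<alpha>) h \<in> carrier (DD \<alpha>)"
proof -
  have fs: "M.fs (push M (rs \<alpha>) h)" by (rule M.push_fs[OF DD_fs[OF h]])
  have "push M (rs \<alpha>) h y = \<zero>\<^bsub>M\<^esub>" if y: "y \<notin> XX \<alpha>" for y
  proof -
    have E: "{z. h z \<noteq> \<zero>\<^bsub>M\<^esub> \<and> rs \<alpha> z = y} = {}"
      using supp_XX[OF h] rs_XX[OF _ ab] y by blast
    show ?thesis unfolding push_def E by simp
  qed
  then show ?thesis using fs by (auto simp: dsum_carrier M.fs_def)
qed

lemma g_hom:
  assumes ab: "\<alpha> \<le> \<beta>"
  shows "push M (rs \<alpha>) \<in> lmod_hom R (DD \<beta>) (DD \<alpha>)"
  unfolding lmod_hom_def
proof (intro CollectI conjI ballI funcsetI)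
  fix h assume "h \<in> carrier (DD \<beta>)"
  then show "push M (rs \<alpha>) h \<in> carrier (DD \<alpha>)" by (rule g_closed[OF ab])
next
  fix x y assume x: "x \<in> carrier (DD \<beta>)" and y: "y \<in> carrier (DD \<beta>)"
  show "push M (rs \<alpha>) (x \<oplus>\<^bsub>DD \<beta>\<^esub> y) = push M (rs \<alpha>) x \<oplus>\<^bsub>DD \<alpha>\<^esub> push M (rs \<alpha>) y"
    unfolding dsum_simps by (rule ext, rule M.push_add[OF DD_fs[OF x] DD_fs[OF y]])
next
  fix a x assume a: "a \<in> carrier R" and x: "x \<in> carrier (DD \<beta>)"
  show "push M (rs \<alpha>) (a \<odot>\<^bsub>DD \<beta>\<^esub> x) = a \<odot>\<^bsub>DD \<alpha>\<^esub> push M (rs \<alpha>) x"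
    unfolding dsum_simps by (rule ext, rule push_smult[OF DD_fs[OF x] a])
qed

lemma g_id:
  assumes h: "h \<in> carrier (DD \<alpha>)"
  shows "push M (rs \<alpha>) h = h"
proof
  fix y show "push M (rs \<alpha>) h y = h y"
    by (rule M.push_id[OF DD_fs[OF h]]) (use supp_XX[OF h] rs_id in blast)
qed

lemma g_comp:
  assumes ab: "\<alpha> \<le> \<beta>" and h: "h \<in> carrier (DD \<gamma>)"
  shows "push M (rs \<alpha>) (push M (rs \<beta>) h) = push M (rs \<alpha>) h"
proof
  fix y show "push M (rs \<alpha>) (push M (rs \<beta>) h) y = push M (rs \<alpha>) h y"
    by (rule trans[OF M.push_comp[OF DD_fs[OF h]]]) (simp add: rs_rs[OF ab])
qed

lemma g_surj:
  assumes ab: "\<alpha> \<le> \<beta>" and cb: "countable {a. a < \<beta>}"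
  shows "push M (rs \<alpha>) ` carrier (DD \<beta>) = carrier (DD \<alpha>)"
proof
  show "push M (rs \<alpha>) ` carrier (DD \<beta>) \<subseteq> carrier (DD \<alpha>)" using g_closed[OF ab] by blast
next
  show "carrier (DD \<alpha>) \<subseteq> push M (rs \<alpha>) ` carrier (DD \<beta>)"
  proof
    fix k assume k: "k \<in> carrier (DD \<alpha>)"
    define s where "s y = (SOME z. z \<in> XX \<beta> \<and> rs \<alpha> z = y)" for y
    have s: "s y \<in> XX \<beta> \<and> rs \<alpha> (s y) = y" if "y \<in> XX \<alpha>" for y
    proof -
      have ex: "\<exists>z. z \<in> XX \<beta> \<and> rs \<alpha> z = y" using XX_ext[OF that ab cb] by blast
      show ?thesis unfolding s_def by (rule someI_ex[OF ex])
    qed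
    define S where "S = {y. k y \<noteq> \<zero>\<^bsub>M\<^esub>}"
    have SX: "S \<subseteq> XX \<alpha>" using supp_XX[OF k] by (auto simp: S_def)
    have fS: "finite S" using k by (simp add: S_def dsum_carrier)
    define h where "h z = (if z \<in> s ` S then k (rs \<alpha> z) else \<zero>\<^bsub>M\<^esub>)" for z
    have kc: "k y \<in> carrier M" for y using k by (auto simp: dsum_carrier)
    have hs: "h (s y) = k y" if "y \<in> S" for y using that s SX by (auto simp: h_def)
    have "{z. h z \<noteq> \<zero>\<^bsub>M\<^esub>} \<subseteq> s ` S" by (auto simp: h_def split: if_splits)
    then have hfin: "finite {z. h z \<noteq> \<zero>\<^bsub>M\<^esub>}" using fS finite_subset by blast
    have "h \<in> carrier (DD \<beta>)"
      unfolding dsum_carrier using hfin kc s SX by (auto simp: h_def)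
    moreover have "push M (rs \<alpha>) h = k"
    proof
      fix y
      show "push M (rs \<alpha>) h y = k y"
      proof (cases "y \<in> S")
        case True
        have "{z. h z \<noteq> \<zero>\<^bsub>M\<^esub> \<and> rs \<alpha> z = y} = {s y}"
        proof -
          have "z = s y" if hz: "h z \<noteq> \<zero>\<^bsub>M\<^esub>" and rz: "rs \<alpha> z = y" for z
          proof -
            have "z \<in> s ` S" using hz by (auto simp: h_def split: if_splits)
            then obtain y' where y': "y' \<in> S" "z = s y'" by blast
            then have "rs \<alpha> z = y'" using s SX by auto
            then show ?thesis using rz y' by simp
          qed
          moreover have "h (s y) \<noteq> \<zero>\<^bsub>M\<^esub>" "rs \<alpha> (s y) = y" using hs[OF True] True s SX
            by (auto simp: S_def)
          ultimately show ?thesis by blast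
        qed
        then show ?thesis unfolding push_def using hs[OF True] kc by simp
      next
        case False
        have E: "{z. h z \<noteq> \<zero>\<^bsub>M\<^esub> \<and> rs \<alpha> z = y} = {}"
        proof -
          have False if hz: "h z \<noteq> \<zero>\<^bsub>M\<^esub>" and rz: "rs \<alpha> z = y" for z
          proof -
            have "z \<in> s ` S" using hz by (auto simp: h_def split: if_splits)
            then obtain y' where y': "y' \<in> S" "z = s y'" by blast
            then have "rs \<alpha> z = y'" using s SX by auto
            then show False using rz y' \<open>y \<notin> S\<close> by simp
          qed
          then show ?thesis by blast
        qed
        show ?thesis unfolding push_def E using False by (simp add: S_def)
      qed
    qed
    ultimately show "k \<in> push M (rs \<alpha>) ` carrier (DD \<beta>)" by blast
  qed
qed

end




context left_module
begin

lemma lim_zero: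
  fixes x :: "'i::linorder \<Rightarrow> ('i \<Rightarrow> nat option) \<Rightarrow> 'c"
  assumes unc: "\<not> countable (UNIV :: 'i set)" and seg: "\<forall>b::'i. countable {a. a < b}"
    and xc: "\<And>i. x i \<in> carrier (DD i)"
    and xcomp: "\<And>i j. i \<le> j \<Longrightarrow> push M (rs i) (x j) = x i"
  shows "x \<alpha>0 y0 = \<zero>\<^bsub>M\<^esub>"
proof (rule ccontr)
  assume ne: "x \<alpha>0 y0 \<noteq> \<zero>\<^bsub>M\<^esub>"
  define S where "S i = {z. x i z \<noteq> \<zero>\<^bsub>M\<^esub>}" for i
  have fS: "finite (S i)" for i using xc[of i] by (simp add: S_def dsum_carrier)
  have SX: "S i \<subseteq> XX i" for i using supp_XX[OF xc] by (auto simp: S_def)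
  have Ssub: "S i \<subseteq> rs i ` S j" if "i \<le> j" for i j
  proof -
    have "{y. push M (rs i) (x j) y \<noteq> \<zero>\<^bsub>M\<^esub>} \<subseteq> rs i ` {z. x j z \<noteq> \<zero>\<^bsub>M\<^esub>}"
      by (rule M.push_supp[OF DD_fs[OF xc]])
    then show ?thesis using xcomp[OF that] by (simp add: S_def)
  qed
  have cmono: "card (S i) \<le> card (S j)" if "i \<le> j" for i j
    using card_mono[OF finite_imageI[OF fS] Ssub[OF that]] card_image_le[OF fS, of "rs i" j] by linarith
  obtain \<beta>1 where b1: "\<alpha>0 \<le> \<beta>1" and const: "\<And>\<gamma>. \<beta>1 \<le> \<gamma> \<Longrightarrow> card (S \<gamma>) = card (S \<beta>1)"
    using mono_eventually_const[OF unc seg, of "\<lambda>i. card (S i)" \<alpha>0] cmono by blast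
  have img: "rs i ` S j = S i" and injS: "inj_on (rs i) (S j)"
    if "\<beta>1 \<le> i" "i \<le> j" for i j
  proof -
    have cij: "card (S j) = card (S i)" using const that by (metis order.trans)
    have le: "card (rs i ` S j) \<le> card (S i)" using card_image_le[OF fS, of "rs i" j] cij by simp
    show "rs i ` S j = S i"
      using card_seteq[OF finite_imageI[OF fS] Ssub[OF that(2)] le] by simp
    then show "inj_on (rs i) (S j)" using inj_on_iff_eq_card[OF fS, of "rs i" j] cij by simp
  qed
  have "y0 \<in> S \<alpha>0" using ne by (simp add: S_def)
  then have "y0 \<in> rs \<alpha>0 ` S \<beta>1" using Ssub[OF b1] by blast
  then obtain y where y: "y \<in> S \<beta>1" by blast
  have exZ: "\<exists>!z. z \<in> S \<gamma> \<and> rs \<beta>1 z = y" if "\<beta>1 \<le> \<gamma>" for \<gamma>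
  proof -
    have "y \<in> rs \<beta>1 ` S \<gamma>" using img[OF order.refl that] y by simp
    moreover have "inj_on (rs \<beta>1) (S \<gamma>)" using injS[OF order.refl that] .
    ultimately show ?thesis by (auto simp: inj_on_def)
  qed
  define Z where "Z \<gamma> = (THE z. z \<in> S \<gamma> \<and> rs \<beta>1 z = y)" for \<gamma>
  have Z: "Z \<gamma> \<in> S \<gamma> \<and> rs \<beta>1 (Z \<gamma>) = y" if "\<beta>1 \<le> \<gamma>" for \<gamma>
    unfolding Z_def by (rule theI'[OF exZ[OF that]])
  have Zcomp: "rs \<beta> (Z \<gamma>) = Z \<beta>" if "\<beta>1 \<le> \<beta>" "\<beta> \<le> \<gamma>" for \<beta> \<gamma>
  proof -
    have g: "\<beta>1 \<le> \<gamma>" using that by (rule order.trans)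
    have "rs \<beta> (Z \<gamma>) \<in> S \<beta>" using img[OF that] Z[OF g] by blast
    moreover have "rs \<beta>1 (rs \<beta> (Z \<gamma>)) = y" using rs_rs[OF that(1)] Z[OF g] by simp
    ultimately show ?thesis using exZ[OF that(1)] Z[OF that(1)] by blast
  qed
  define G where "G \<delta> = (SOME \<gamma>. \<delta> < \<gamma> \<and> \<beta>1 \<le> \<gamma>)" for \<delta>
  have G: "\<delta> < G \<delta> \<and> \<beta>1 \<le> G \<delta>" for \<delta>
  proof -
    obtain \<gamma> where "\<delta> < \<gamma>" using exists_greater[OF unc seg] by blast
    then have "\<delta> < max \<gamma> \<beta>1 \<and> \<beta>1 \<le> max \<gamma> \<beta>1" by (simp add: less_max_iff_disj)
    then show ?thesis unfolding G_def by (rule someI)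
  qed
  define F where "F \<delta> = the (Z (G \<delta>) \<delta>)" for \<delta>
  have "inj F"
  proof (rule injI)
    fix d1 d2 assume eq: "F d1 = F d2"
    define \<gamma> where "\<gamma> = max (G d1) (G d2)"
    have g1: "G d1 \<le> \<gamma>" "G d2 \<le> \<gamma>" by (simp_all add: \<gamma>_def)
    have b\<gamma>: "\<beta>1 \<le> \<gamma>" using G[of d1] g1 order.trans by blast
    have l1: "d1 < \<gamma>" "d2 < \<gamma>" using G[of d1] G[of d2] g1 less_le_trans by blast+
    have "Z (G d1) = rs (G d1) (Z \<gamma>)" using Zcomp[of "G d1" \<gamma>] G g1 by simp
    then have z1: "Z (G d1) d1 = Z \<gamma> d1" using G[of d1] by (simp add: rs_def)
    have "Z (G d2) = rs (G d2) (Z \<gamma>)" using Zcomp[of "G d2" \<gamma>] G g1 by simp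
    then have z2: "Z (G d2) d2 = Z \<gamma> d2" using G[of d2] by (simp add: rs_def)
    have zX: "Z \<gamma> \<in> XX \<gamma>" using Z[OF b\<gamma>] SX by blast
    then have dom: "Z \<gamma> d1 \<noteq> None" "Z \<gamma> d2 \<noteq> None" using l1 by (auto simp: XX_def)
    have "Z \<gamma> d1 = Z \<gamma> d2" using eq dom by (auto simp: F_def z1 z2)
    moreover have "inj_on (Z \<gamma>) {a. a < \<gamma>}" using zX by (simp add: XX_def)
    ultimately show "d1 = d2" using l1 by (auto simp: inj_on_def)
  qed
  then have "countable (UNIV :: 'i set)" by (rule countableI)
  then show False using unc by simp
qed

end




theorem mainTheorem3:
  fixes R :: "('a, 'r) ring_scheme"
    and M :: "('a, 'm, 'e) module_scheme"
    and idx :: "'i::wellorder itself"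
  assumes "left_module R M"
    and omega1_uncountable: "\<not> countable (UNIV :: 'i set)"
    and omega1_segments: "\<forall>b::'i. countable {a. a < b}"
  shows "\<exists>(X :: 'i \<Rightarrow> ('i \<Rightarrow> nat option) set) (g :: 'i \<Rightarrow> 'i \<Rightarrow> (('i \<Rightarrow> nat option) \<Rightarrow> 'm) \<Rightarrow> (('i \<Rightarrow> nat option) \<Rightarrow> 'm)).
           inverse_system R (\<lambda>\<alpha>. dsum_copies (X \<alpha>) M) g
         \<and> (\<forall>\<alpha> \<beta>. \<alpha> \<le> \<beta> \<longrightarrow> g \<alpha> \<beta> ` carrier (dsum_copies (X \<beta>) M) = carrier (dsum_copies (X \<alpha>) M))
         \<and> inv_limit_zero (\<lambda>\<alpha>. dsum_copies (X \<alpha>) M) g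
         \<and> (carrier M \<noteq> {\<zero>\<^bsub>M\<^esub>} \<longrightarrow>
              mittag_leffler (\<lambda>\<alpha>. dsum_copies (X \<alpha>) M) g
            \<and> \<not> strict_mittag_leffler (\<lambda>\<alpha>. dsum_copies (X \<alpha>) M) g)"
proof -
  interpret left_module R M by (rule assms(1))
  note unc = omega1_uncountable and seg = omega1_segments
  define g :: "'i \<Rightarrow> 'i \<Rightarrow> (('i \<Rightarrow> nat option) \<Rightarrow> 'm) \<Rightarrow> (('i \<Rightarrow> nat option) \<Rightarrow> 'm)"
    where "g \<alpha> \<beta> = push M (rs \<alpha>)" for \<alpha> \<beta>
  have invs: "inverse_system R (\<lambda>\<alpha>. DD \<alpha>) g"
    unfolding inverse_system_def g_def
  proof (intro conjI allI impI ballI)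
    fix i show "left_module R (DD i)" by (rule dsum_left_module[OF assms(1)])
  next
    fix i j :: 'i assume "i \<le> j"
    then show "push M (rs i) \<in> lmod_hom R (DD j) (DD i)" by (rule g_hom)
  next
    fix i :: 'i and x assume "x \<in> carrier (DD i)"
    then show "push M (rs i) x = x" by (rule g_id)
  next
    fix i j k :: 'i and x assume "i \<le> j" "j \<le> k" "x \<in> carrier (DD k)"
    then show "push M (rs i) (push M (rs j) x) = push M (rs i) x" by (intro g_comp)
  qed
  have surj: "\<forall>\<alpha> \<beta>. \<alpha> \<le> \<beta> \<longrightarrow> g \<alpha> \<beta> ` carrier (DD \<beta>) = carrier (DD \<alpha>)"
    unfolding g_def
  proof (intro allI impI)
    fix \<alpha> \<beta> :: 'i assume "\<alpha> \<le> \<beta>"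
    then show "push M (rs \<alpha>) ` carrier (DD \<beta>) = carrier (DD \<alpha>)" by (rule g_surj[OF _ seg[rule_format]])
  qed
  have zero_in: "(\<lambda>i. \<zero>\<^bsub>DD i\<^esub>) \<in> inv_limit (\<lambda>\<alpha>. DD \<alpha>) g"
  proof -
    have Z: "push M (rs i) (\<lambda>_. \<zero>\<^bsub>M\<^esub>) = (\<lambda>_. \<zero>\<^bsub>M\<^esub>)" for i
    proof
      fix y
      have E: "{z. (\<lambda>_. \<zero>\<^bsub>M\<^esub>) z \<noteq> \<zero>\<^bsub>M\<^esub> \<and> rs i z = y} = {}" by simp
      show "push M (rs i) (\<lambda>_. \<zero>\<^bsub>M\<^esub>) y = \<zero>\<^bsub>M\<^esub>" unfolding push_def E by simp
    qed
    show ?thesis unfolding inv_limit_def g_def dsum_simps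
    proof (intro CollectI conjI allI impI)
      fix i show "(\<lambda>_. \<zero>\<^bsub>M\<^esub>) \<in> carrier (DD i)" by (simp add: dsum_carrier)
    next
      fix i j :: 'i show "push M (rs i) (\<lambda>_. \<zero>\<^bsub>M\<^esub>) = (\<lambda>_. \<zero>\<^bsub>M\<^esub>)" by (rule Z)
    qed
  qed
  have limz: "inv_limit_zero (\<lambda>\<alpha>. DD \<alpha>) g"
    unfolding inv_limit_zero_def
  proof
    show "inv_limit (\<lambda>\<alpha>. DD \<alpha>) g \<subseteq> {\<lambda>i. \<zero>\<^bsub>DD i\<^esub>}"
    proof
      fix x assume x: "x \<in> inv_limit (\<lambda>\<alpha>. DD \<alpha>) g"
      have "x i y = \<zero>\<^bsub>M\<^esub>" for i y
        by (rule lim_zero[OF unc seg]) (use x in \<open>auto simp: inv_limit_def g_def\<close>)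
      then show "x \<in> {\<lambda>i. \<zero>\<^bsub>DD i\<^esub>}" by (auto simp: fun_eq_iff)
    qed
  qed (use zero_in in simp)
  have ml: "carrier M \<noteq> {\<zero>\<^bsub>M\<^esub>} \<longrightarrow>
              mittag_leffler (\<lambda>\<alpha>. DD \<alpha>) g \<and> \<not> strict_mittag_leffler (\<lambda>\<alpha>. DD \<alpha>) g"
  proof
    assume nz: "carrier M \<noteq> {\<zero>\<^bsub>M\<^esub>}"
    then obtain m where m: "m \<in> carrier M" "m \<noteq> \<zero>\<^bsub>M\<^esub>" using M.zero_closed by blast
    show "mittag_leffler (\<lambda>\<alpha>. DD \<alpha>) g \<and> \<not> strict_mittag_leffler (\<lambda>\<alpha>. DD \<alpha>) g"
    proof
      show "mittag_leffler (\<lambda>\<alpha>. DD \<alpha>) g"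
        unfolding mittag_leffler_def
      proof (intro allI)
        fix i :: 'i
        have "\<forall>k\<ge>i. g i i ` carrier (DD i) = g i k ` carrier (DD k)"
          using surj by simp
        then show "\<exists>j\<ge>i. \<forall>k\<ge>j. g i j ` carrier (DD j) = g i k ` carrier (DD k)"
          by (intro exI[of _ i]) simp
      qed
    next
      show "\<not> strict_mittag_leffler (\<lambda>\<alpha>. DD \<alpha>) g"
      proof
        assume sml: "strict_mittag_leffler (\<lambda>\<alpha>. DD \<alpha>) g"
        have "\<exists>j\<ge>(undefined::'i). g undefined j ` carrier (DD j) = (\<lambda>x. x undefined) ` inv_limit (\<lambda>\<alpha>. DD \<alpha>) g"
          using sml unfolding strict_mittag_leffler_def by (rule spec)
        then obtain j where j: "undefined \<le> j"
          and eqj: "g undefined j ` carrier (DD j) = (\<lambda>x. x undefined) ` inv_limit (\<lambda>\<alpha>. DD \<alpha>) g"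
          by blast
        have "carrier (DD (undefined::'i)) = {\<lambda>_. \<zero>\<^bsub>M\<^esub>}"
        proof -
          have "carrier (DD (undefined::'i)) = g undefined j ` carrier (DD j)"
            using surj[rule_format, OF j] by simp
          also have "\<dots> = (\<lambda>x. x undefined) ` {\<lambda>i. \<zero>\<^bsub>DD i\<^esub>}"
            using eqj limz unfolding inv_limit_zero_def by simp
          finally show ?thesis by simp
        qed
        moreover obtain f where f: "f \<in> XX (undefined::'i)" using XX_ne[OF seg] by blast
        define h where "h z = (if z = f then m else \<zero>\<^bsub>M\<^esub>)" for z
        have "h \<in> carrier (DD (undefined::'i))" using f m by (auto simp: h_def dsum_carrier)
        moreover have "h \<noteq> (\<lambda>_. \<zero>\<^bsub>M\<^esub>)" using m by (auto simp: h_def fun_eq_iff)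
        ultimately show False by blast
      qed
    qed
  qed
  show ?thesis
    apply (rule exI[where x=XX])
    apply (rule exI[where x=g])
    using invs surj limz ml by (intro conjI)
qed


end
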